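(* Let $\kappa=(\xi,\eta)\in S\mathbb{H}$ and $\nu=(\alpha,\beta)\in\mathbb{H}^2$. Then $\{\kappa,\nu\}=0$ if and only if $\nu=\kappa x$ for some $x\in\mathbb{H}$.
   Context: For $q=a+bi+cj+dk\in\mathbb{H}$, $q^*=a+bi+cj-dk$, $\bar q=a-bi-cj-dk$. $\mathcal{V}=\mathrm{span}_\mathbb{R}\{1,i,j\}$. $S\mathbb{H}=\{(\xi,\eta)\in\mathbb{H}^2\setminus\{(0,0)\}:\xi\bar\eta\in\mathcal{V}\}$. The bracket of $\kappa_m=(\xi_m,\eta_m)\in\mathbb{H}^2$ is $\{\kappa_1,\kappa_2\}=\xi_1^*\eta_2-\eta_1^*\xi_2$. Right multiplication: $(\xi,\eta)x=(\xi x,\eta x)$. *)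

theory Defs
  imports Complex_Main
begin

datatype quat = Quat (qRe: real) (qI: real) (qJ: real) (qK: real)

instantiation quat :: "{zero, plus, minus, uminus, times}"
begin
definition "0 = Quat 0 0 0 0"
definition "p + q = Quat (qRe p + qRe q) (qI p + qI q) (qJ p + qJ q) (qK p + qK q)"
definition "p - q = Quat (qRe p - qRe q) (qI p - qI q) (qJ p - qJ q) (qK p - qK q)"
definition "- q = Quat (- qRe q) (- qI q) (- qJ q) (- qK q)"
text \<open>Hamilton product (i^2 = j^2 = k^2 = ijk = -1).\<close>
definition "p * q = Quat
   (qRe p * qRe q - qI p * qI q - qJ p * qJ q - qK p * qK q)
   (qRe p * qI q + qI p * qRe q + qJ p * qK q - qK p * qJ q)
   (qRe p * qJ q - qI p * qK q + qJ p * qRe q + qK p * qI q)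
   (qRe p * qK q + qI p * qJ q - qJ p * qI q + qK p * qRe q)"
instance ..
end

definition qstar :: "quat \<Rightarrow> quat" where
  "qstar q = Quat (qRe q) (qI q) (qJ q) (- qK q)"

definition qcnj :: "quat \<Rightarrow> quat" where
  "qcnj q = Quat (qRe q) (- qI q) (- qJ q) (- qK q)"

definition qV :: "quat set" where
  "qV = {q. \<exists>a b c. q = Quat a b c 0}"

definition SH :: "(quat \<times> quat) set" where
  "SH = {(\<xi>, \<eta>). (\<xi>, \<eta>) \<noteq> (0, 0) \<and> \<xi> * qcnj \<eta> \<in> qV}"

definition bracket :: "quat \<times> quat \<Rightarrow> quat \<times> quat \<Rightarrow> quat" where
  "bracket k1 k2 = qstar (fst k1) * snd k2 - qstar (snd k1) * fst k2"

definition rmult :: "quat \<times> quat \<Rightarrow> quat \<Rightarrow> quat \<times> quat" where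
  "rmult k x = (fst k * x, snd k * x)"

end

theory Submission
  imports Defs
begin

lemma qeq: "p = q \<longleftrightarrow> qRe p = qRe q \<and> qI p = qI q \<and> qJ p = qJ q \<and> qK p = qK q"
  by (cases p; cases q) auto

definition sc :: "real \<Rightarrow> quat \<Rightarrow> quat" where
  "sc r q = Quat (r * qRe q) (r * qI q) (r * qJ q) (r * qK q)"

definition nq :: "quat \<Rightarrow> real" where
  "nq p = qRe p^2 + qI p^2 + qJ p^2 + qK p^2"

lemma nq_pos: "p \<noteq> 0 \<Longrightarrow> nq p \<noteq> 0"
  by (cases p) (auto simp: nq_def zero_quat_def add_nonneg_eq_0_iff)

lemma mult_sc: "p * sc r q = sc r (p * q)"
  by (simp add: sc_def times_quat_def algebra_simps)

lemma sc_sc: "sc r (sc s q) = sc (r*s) q" "sc 1 q = q"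
  by (auto simp: sc_def qeq)

lemma inv_right: "p * (qcnj p * a) = sc (nq p) a"
  by (simp add: sc_def nq_def times_quat_def qcnj_def qeq) algebra

lemma key:
  assumes "\<xi> * qcnj \<eta> \<in> qV"
  shows "qstar \<xi> * (\<eta> * x) - qstar \<eta> * (\<xi> * x) = 0"
  using assms unfolding qV_def qeq
  by (auto simp: times_quat_def qcnj_def qstar_def minus_quat_def zero_quat_def qeq) algebra+

lemma bk0:
  assumes "\<xi> * qcnj \<eta> \<in> qV" "qstar \<xi> * \<beta> - qstar \<eta> * \<alpha> = 0"
  shows "(qRe \<xi>^2 + qI \<xi>^2 + qJ \<xi>^2 + qK \<xi>^2) * qRe \<beta> = qRe (\<eta> * (qcnj \<xi> * \<alpha>))"
   "(qRe \<xi>^2 + qI \<xi>^2 + qJ \<xi>^2 + qK \<xi>^2) * qI \<beta> = qI (\<eta> * (qcnj \<xi> * \<alpha>))"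
   "(qRe \<xi>^2 + qI \<xi>^2 + qJ \<xi>^2 + qK \<xi>^2) * qJ \<beta> = qJ (\<eta> * (qcnj \<xi> * \<alpha>))"
   "(qRe \<xi>^2 + qI \<xi>^2 + qJ \<xi>^2 + qK \<xi>^2) * qK \<beta> = qK (\<eta> * (qcnj \<xi> * \<alpha>))"
  using assms unfolding qV_def qeq
  by (auto simp: times_quat_def qcnj_def qstar_def minus_quat_def zero_quat_def qeq) algebra+

lemma bk:
  assumes "\<xi> * qcnj \<eta> \<in> qV" "qstar \<xi> * \<beta> - qstar \<eta> * \<alpha> = 0"
  shows "\<eta> * (qcnj \<xi> * \<alpha>) = sc (nq \<xi>) \<beta>"
  using bk0[OF assms] by (simp add: qeq sc_def nq_def)

lemma V_swap: "\<xi> * qcnj \<eta> \<in> qV \<Longrightarrow> \<eta> * qcnj \<xi> \<in> qV"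
  unfolding qV_def by (auto simp: times_quat_def qcnj_def qeq) (simp add: algebra_simps)

lemma swap_eq: "qstar \<xi> * \<beta> - qstar \<eta> * \<alpha> = 0 \<Longrightarrow> qstar \<eta> * \<alpha> - qstar \<xi> * \<beta> = 0"
  by (simp add: qeq minus_quat_def zero_quat_def)

lemma solve:
  assumes "\<xi> * qcnj \<eta> \<in> qV" "qstar \<xi> * \<beta> - qstar \<eta> * \<alpha> = 0" "\<xi> \<noteq> 0"
  shows "\<exists>x. \<alpha> = \<xi> * x \<and> \<beta> = \<eta> * x"
proof -
  define x where "x = sc (1 / nq \<xi>) (qcnj \<xi> * \<alpha>)"
  have n: "nq \<xi> \<noteq> 0" using nq_pos assms(3) .
  have "\<xi> * x = \<alpha>" unfolding x_def mult_sc inv_right sc_sc using n by (simp add: sc_sc)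
  moreover have "\<eta> * x = \<beta>" unfolding x_def mult_sc bk[OF assms(1,2)] sc_sc using n by (simp add: sc_sc)
  ultimately show ?thesis by metis
qed

theorem lemma3p5:
  fixes \<kappa> \<nu> :: "quat \<times> quat"
  assumes "\<kappa> \<in> SH"
  shows "bracket \<kappa> \<nu> = 0 \<longleftrightarrow> (\<exists>x. \<nu> = rmult \<kappa> x)"
proof -
  obtain \<xi> \<eta> where k: "\<kappa> = (\<xi>, \<eta>)" by fastforce
  obtain \<alpha> \<beta> where n: "\<nu> = (\<alpha>, \<beta>)" by fastforce
  have V: "\<xi> * qcnj \<eta> \<in> qV" and nz: "\<xi> \<noteq> 0 \<or> \<eta> \<noteq> 0"
    using assms k by (auto simp: SH_def)
  show ?thesis
  proof
    assume "bracket \<kappa> \<nu> = 0"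
    hence b: "qstar \<xi> * \<beta> - qstar \<eta> * \<alpha> = 0" by (simp add: bracket_def k n)
    show "\<exists>x. \<nu> = rmult \<kappa> x"
    proof (cases "\<xi> = 0")
      case False
      then show ?thesis using solve[OF V b] by (auto simp: k n rmult_def)
    next
      case True
      then show ?thesis using solve[OF V_swap[OF V] swap_eq[OF b]] nz
        by (auto simp: k n rmult_def)
    qed
  next
    assume "\<exists>x. \<nu> = rmult \<kappa> x"
    then obtain x where "\<nu> = rmult \<kappa> x" by blast
    then show "bracket \<kappa> \<nu> = 0" using key[OF V, of x] by (simp add: bracket_def k rmult_def)
  qed
qed

end
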